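(* Suppose $\mathit{Act}=\{a\}$. Then $\mathcal{E}_{\omega,1}'=\{A1,A2,A3,A4,V1_\omega,O1\}$ is complete for $\simeq_\omega$ over open monitors: for all monitors $m,n$, if $m\simeq_\omega n$ then $\mathcal{E}_{\omega,1}'\vdash m=n$.
   Context: Monitors: terms $m,n ::= v \mid a.m \mid m+n \mid x$ over the action set $\mathit{Act}$ and variables $x$, verdicts $v::=\mathit{end}\mid\mathit{yes}\mid\mathit{no}$. Semantics: $\xrightarrow{\alpha}$ ($\alpha\in\mathit{Act}\cup\{\tau\}$) is the least relation with $a.m\xrightarrow{a}m$; $m\xrightarrow{\alpha}m'$ implies $m+n\xrightarrow{\alpha}m'$ and $n+m\xrightarrow{\alpha}m'$; $v\xrightarrow{\alpha}v$ for verdicts $v$. Weak transitions: $m\xRightarrow{\varepsilon}m'$ iff $m(\xrightarrow{\tau})^*m'$; $m\xRightarrow{a}m'$ iff $m\xRightarrow{\varepsilon}\xrightarrow{a}\xRightarrow{\varepsilon}m'$; $m\xRightarrow{as'}m'$ ($s'\ne\varepsilon$) iff $m\xRightarrow{a}m_1\xRightarrow{s'}m'$. For closed $m$, $L_a(m)=\{s\mid m\xRightarrow{s}\mathit{yes}\}$, $L_r(m)=\{s\mid m\xRightarrow{s}\mathit{no}\}$; closed $m\simeq_\omega n$ iff $L_a(m)\cdot\mathit{Act}^\omega=L_a(n)\cdot\mathit{Act}^\omega$ and $L_r(m)\cdot\mathit{Act}^\omega=L_r(n)\cdot\mathit{Act}^\omega$; for open terms iff $\sigma(m)\simeq_\omega\sigma(n)$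 for all closed substitutions $\sigma$. $\mathcal{E}\vdash m=n$ denotes derivability by reflexivity, symmetry, transitivity, substitution and congruence for $a.\_$ and $+$. Axioms: (A1) $x+y=y+x$; (A2) $x+(y+z)=(x+y)+z$; (A3) $x+x=x$; (A4) $x+\mathit{end}=x$; ($V1_\omega$) $x=a.x$; (O1) $\mathit{yes}+\mathit{no}=\mathit{yes}+\mathit{no}+x$. *)

theory Defs
  imports Main
begin

datatype verdict = End | Yes | No

datatype 'a mon = V verdict | Pre 'a "'a mon" | Plus "'a mon" "'a mon" | Var nat

(* Transitions labelled by Some a (action a) or None (tau). *)

inductive step :: "'a mon \<Rightarrow> 'a option \<Rightarrow> 'a mon \<Rightarrow> bool" where
  pre: "step (Pre a m) (Some a) m"
| plusL: "step m \<alpha> m' \<Longrightarrow> step (Plus m n) \<alpha> m'"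
| plusR: "step m \<alpha> m' \<Longrightarrow> step (Plus n m) \<alpha> m'"
| verd: "step (V v) \<alpha> (V v)"

definition weak_eps :: "'a mon \<Rightarrow> 'a mon \<Rightarrow> bool" where
  "weak_eps = (\<lambda>m m'. step m None m')\<^sup>*\<^sup>*"

definition weak_act :: "'a mon \<Rightarrow> 'a \<Rightarrow> 'a mon \<Rightarrow> bool" where
  "weak_act m a m' \<longleftrightarrow> (\<exists>m1 m2. weak_eps m m1 \<and> step m1 (Some a) m2 \<and> weak_eps m2 m')"

fun weak_tr :: "'a mon \<Rightarrow> 'a list \<Rightarrow> 'a mon \<Rightarrow> bool" where
  "weak_tr m [] m' = weak_eps m m'"
| "weak_tr m [a] m' = weak_act m a m'"
| "weak_tr m (a # b # s) m' = (\<exists>m1. weak_act m a m1 \<and> weak_tr m1 (b # s) m')"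

fun vars :: "'a mon \<Rightarrow> nat set" where
  "vars (V v) = {}"
| "vars (Pre a m) = vars m"
| "vars (Plus m n) = vars m \<union> vars n"
| "vars (Var x) = {x}"

definition closed :: "'a mon \<Rightarrow> bool" where
  "closed m \<longleftrightarrow> vars m = {}"

definition L_acc :: "'a mon \<Rightarrow> 'a list set" where
  "L_acc m = {s. weak_tr m s (V Yes)}"

definition L_rej :: "'a mon \<Rightarrow> 'a list set" where
  "L_rej m = {s. weak_tr m s (V No)}"

(* L <cdot> Act^<omega>: infinite words (nat <Rightarrow> 'a) having a prefix in L. *)
definition omega_ext :: "'a list set \<Rightarrow> (nat \<Rightarrow> 'a) set" where
  "omega_ext L = {w. \<exists>s\<in>L. \<forall>i<length s. w i = s ! i}"

definition closed_eq :: "'a mon \<Rightarrow> 'a mon \<Rightarrow> bool" where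
  "closed_eq m n \<longleftrightarrow> omega_ext (L_acc m) = omega_ext (L_acc n)
                     \<and> omega_ext (L_rej m) = omega_ext (L_rej n)"

fun subst :: "(nat \<Rightarrow> 'a mon) \<Rightarrow> 'a mon \<Rightarrow> 'a mon" where
  "subst \<sigma> (V v) = V v"
| "subst \<sigma> (Pre a m) = Pre a (subst \<sigma> m)"
| "subst \<sigma> (Plus m n) = Plus (subst \<sigma> m) (subst \<sigma> n)"
| "subst \<sigma> (Var x) = \<sigma> x"

definition omega_equiv :: "'a mon \<Rightarrow> 'a mon \<Rightarrow> bool" where
  "omega_equiv m n \<longleftrightarrow>
     (\<forall>\<sigma>. (\<forall>x. closed (\<sigma> x)) \<longrightarrow> closed_eq (subst \<sigma> m) (subst \<sigma> n))"

inductive derivable :: "('a mon \<times> 'a mon) set \<Rightarrow> 'a mon \<Rightarrow> 'a mon \<Rightarrow> bool"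
  for E where
  ax: "(m, n) \<in> E \<Longrightarrow> derivable E m n"
| refl: "derivable E m m"
| sym: "derivable E m n \<Longrightarrow> derivable E n m"
| trans: "derivable E m n \<Longrightarrow> derivable E n k \<Longrightarrow> derivable E m k"
| subst: "derivable E m n \<Longrightarrow> derivable E (subst \<sigma> m) (subst \<sigma> n)"
| cong_pre: "derivable E m n \<Longrightarrow> derivable E (Pre a m) (Pre a n)"
| cong_plus: "derivable E m n \<Longrightarrow> derivable E m' n' \<Longrightarrow> derivable E (Plus m m') (Plus n n')"

(* The axiom system E'_{<omega>,1} = {A1,A2,A3,A4,V1_<omega>,O1}, variables x,y,z = 0,1,2. *)
definition E_omega1' :: "('a mon \<times> 'a mon) set" where
  "E_omega1' =
    {(Plus (Var 0) (Var 1), Plus (Var 1) (Var 0)),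
     (Plus (Var 0) (Plus (Var 1) (Var 2)), Plus (Plus (Var 0) (Var 1)) (Var 2)),
     (Plus (Var 0) (Var 0), Var 0),
     (Plus (Var 0) (V End), Var 0),
     (Plus (V Yes) (V No), Plus (Plus (V Yes) (V No)) (Var 0))}
    \<union> {(Var 0, Pre b (Var 0)) | b. True}"

end

theory Submission
  imports Defs
begin

abbreviation D where "D \<equiv> derivable E_omega1'"

lemma D_comm: "D (Plus x y) (Plus y x)"
proof -
  have "D (Plus (Var 0) (Var 1)) (Plus (Var 1) (Var 0))"
    by (rule derivable.ax) (simp add: E_omega1'_def)
  from derivable.subst[OF this, of "\<lambda>i. if i=0 then x else y"] show ?thesis by simp
qed

lemma D_assoc: "D (Plus x (Plus y z)) (Plus (Plus x y) z)"
proof -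
  have "D (Plus (Var 0) (Plus (Var 1) (Var 2))) (Plus (Plus (Var 0) (Var 1)) (Var 2))"
    by (rule derivable.ax) (simp add: E_omega1'_def)
  from derivable.subst[OF this, of "\<lambda>i. if i=0 then x else if i = 1 then y else z"]
  show ?thesis by simp
qed

lemma D_idem: "D (Plus x x) x"
proof -
  have "D (Plus (Var 0) (Var 0)) (Var 0)"
    by (rule derivable.ax) (simp add: E_omega1'_def)
  from derivable.subst[OF this, of "\<lambda>i. x"] show ?thesis by simp
qed

lemma D_end: "D (Plus x (V End)) x"
proof -
  have "D (Plus (Var 0) (V End)) (Var 0)"
    by (rule derivable.ax) (simp add: E_omega1'_def)
  from derivable.subst[OF this, of "\<lambda>i. x"] show ?thesis by simp
qed

lemma D_pre: "D (Pre b x) x"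
proof -
  have "D (Var 0) (Pre b (Var 0))"
    by (rule derivable.ax) (auto simp add: E_omega1'_def)
  from derivable.subst[OF this, of "\<lambda>i. x"] show ?thesis by (simp add: derivable.sym)
qed

lemma D_O1: "D (Plus (Plus (V Yes) (V No)) x) (Plus (V Yes) (V No))"
proof -
  have "D (Plus (V Yes) (V No)) (Plus (Plus (V Yes) (V No)) (Var 0))"
    by (rule derivable.ax) (simp add: E_omega1'_def)
  from derivable.subst[OF this, of "\<lambda>i. x"] show ?thesis by (simp add: derivable.sym)
qed

fun leaves :: "'a mon \<Rightarrow> 'a mon set" where
  "leaves (V v) = {V v}"
| "leaves (Pre b m) = leaves m"
| "leaves (Plus m n) = leaves m \<union> leaves n"
| "leaves (Var x) = {Var x}"

lemma leaves_form: "l \<in> leaves m \<Longrightarrow> (\<exists>v. l = V v) \<or> (\<exists>x. l = Var x)"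
  by (induction m) auto

lemmas [trans] = derivable.trans

lemma absorb_leaf: "l \<in> leaves m \<Longrightarrow> D (Plus m l) m"
proof (induction m)
  case (V v) then show ?case by (simp add: D_idem)
next
  case (Var x) then show ?case by (simp add: D_idem)
next
  case (Pre b m)
  have "D (Plus (Pre b m) l) (Plus m l)"
    by (rule derivable.cong_plus[OF D_pre derivable.refl])
  also have "D (Plus m l) m" using Pre by simp
  also have "D m (Pre b m)" by (rule derivable.sym[OF D_pre])
  finally show ?case .
next
  case (Plus m1 m2)
  have a: "D (Plus (Plus m1 m2) l) (Plus m1 (Plus m2 l))" by (rule derivable.sym[OF D_assoc])
  show ?case
  proof (cases "l \<in> leaves m1")
    case True
    note a
    also have "D (Plus m1 (Plus m2 l)) (Plus m1 (Plus l m2))"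
      by (rule derivable.cong_plus[OF derivable.refl D_comm])
    also have "D (Plus m1 (Plus l m2)) (Plus (Plus m1 l) m2)" by (rule D_assoc)
    also have "D (Plus (Plus m1 l) m2) (Plus m1 m2)"
      by (rule derivable.cong_plus[OF _ derivable.refl]) (use Plus.IH(1) True in simp)
    finally show ?thesis .
  next
    case False
    note a
    also have "D (Plus m1 (Plus m2 l)) (Plus m1 m2)"
      by (rule derivable.cong_plus[OF derivable.refl]) (use Plus.IH(2) False Plus.prems in simp)
    finally show ?thesis .
  qed
qed

lemma absorb: "leaves n \<subseteq> leaves m \<union> {V End} \<Longrightarrow> D (Plus m n) m"
proof (induction n)
  case (V v)
  then show ?case by (cases "v = End") (auto simp: D_end absorb_leaf)
next
  case (Var x) then show ?case by (auto simp: absorb_leaf)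
next
  case (Pre b n)
  have "D (Plus m (Pre b n)) (Plus m n)"
    by (rule derivable.cong_plus[OF derivable.refl D_pre])
  also have "D (Plus m n) m" using Pre by simp
  finally show ?case .
next
  case (Plus n1 n2)
  have "D (Plus m (Plus n1 n2)) (Plus (Plus m n1) n2)" by (rule D_assoc)
  also have "D (Plus (Plus m n1) n2) (Plus m n2)"
    by (rule derivable.cong_plus[OF _ derivable.refl]) (use Plus in simp)
  also have "D (Plus m n2) m" using Plus by simp
  finally show ?case .
qed

lemma same_leaves: "leaves m - {V End} = leaves n - {V End} \<Longrightarrow> D m n"
proof -
  assume h: "leaves m - {V End} = leaves n - {V End}"
  have "D m (Plus m n)" by (rule derivable.sym[OF absorb]) (use h in blast)
  also have "D (Plus m n) (Plus n m)" by (rule D_comm)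
  also have "D (Plus n m) n" by (rule absorb) (use h in blast)
  finally show ?thesis .
qed

lemma yes_no: "V Yes \<in> leaves m \<Longrightarrow> V No \<in> leaves m \<Longrightarrow> D m (Plus (V Yes) (V No))"
proof -
  assume "V Yes \<in> leaves m" "V No \<in> leaves m"
  then have "D (Plus m (Plus (V Yes) (V No))) m" by (intro absorb) auto
  hence "D m (Plus m (Plus (V Yes) (V No)))" by (rule derivable.sym)
  also have "D (Plus m (Plus (V Yes) (V No))) (Plus (Plus (V Yes) (V No)) m)" by (rule D_comm)
  also have "D (Plus (Plus (V Yes) (V No)) m) (Plus (V Yes) (V No))" by (rule D_O1)
  finally show ?thesis .
qed

lemma step_leaves: "step c \<alpha> c' \<Longrightarrow> leaves c' \<subseteq> leaves c"
  by (induction rule: step.induct) auto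

lemma eps_leaves: "weak_eps c c' \<Longrightarrow> leaves c' \<subseteq> leaves c"
  unfolding weak_eps_def
  by (induction rule: rtranclp_induct) (auto dest: step_leaves)

lemma act_leaves: "weak_act c b c' \<Longrightarrow> leaves c' \<subseteq> leaves c"
  unfolding weak_act_def by (blast dest: eps_leaves step_leaves)

lemma tr_leaves: "weak_tr c s c' \<Longrightarrow> leaves c' \<subseteq> leaves c"
  by (induction c s c' rule: weak_tr.induct) (auto dest: eps_leaves act_leaves)

lemma eps_trans: "weak_eps x y \<Longrightarrow> weak_eps y z \<Longrightarrow> weak_eps x z"
  unfolding weak_eps_def by (rule rtranclp_trans)

lemma tr_cons: "weak_act c b c1 \<Longrightarrow> weak_tr c1 s c' \<Longrightarrow> weak_tr c (b # s) c'"
proof (cases s)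
  case Nil
  assume "weak_act c b c1" "weak_tr c1 s c'"
  then obtain m1 m2 where "weak_eps c m1" "step m1 (Some b) m2" "weak_eps m2 c1"
    unfolding weak_act_def by blast
  moreover have "weak_eps c1 c'" using Nil \<open>weak_tr c1 s c'\<close> by simp
  ultimately have "weak_act c b c'" unfolding weak_act_def by (blast intro: eps_trans)
  with Nil show ?thesis by simp
next
  case (Cons x xs)
  assume "weak_act c b c1" "weak_tr c1 s c'"
  with Cons show ?thesis by auto
qed

lemma first_step: "V v \<in> leaves c \<Longrightarrow> c = V v \<or> step c None (V v) \<or>
    (\<exists>b c'. step c (Some b) c' \<and> V v \<in> leaves c' \<and> size c' < size c)"
proof (induction c)
  case (Plus c1 c2)
  have lift: "V v \<in> leaves ci \<Longrightarrow> (V v \<in> leaves ci \<Longrightarrow> ci = V v \<or> step ci None (V v) \<or>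
    (\<exists>b c'. step ci (Some b) c' \<and> V v \<in> leaves c' \<and> size c' < size ci)) \<Longrightarrow>
    (\<forall>\<alpha> t. step ci \<alpha> t \<longrightarrow> step (Plus c1 c2) \<alpha> t) \<Longrightarrow> size ci < size (Plus c1 c2) \<Longrightarrow>
    step (Plus c1 c2) None (V v) \<or>
    (\<exists>b c'. step (Plus c1 c2) (Some b) c' \<and> V v \<in> leaves c' \<and> size c' < size (Plus c1 c2))"
    for ci
  proof -
    assume a: "V v \<in> leaves ci" and ih: "V v \<in> leaves ci \<Longrightarrow> ci = V v \<or> step ci None (V v) \<or>
    (\<exists>b c'. step ci (Some b) c' \<and> V v \<in> leaves c' \<and> size c' < size ci)"
      and l: "\<forall>\<alpha> t. step ci \<alpha> t \<longrightarrow> step (Plus c1 c2) \<alpha> t" and sz: "size ci < size (Plus c1 c2)"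
    from ih[OF a] show ?thesis
    proof (elim disjE exE conjE)
      assume "ci = V v"
      then have "step ci None (V v)" by (simp add: step.verd)
      then show ?thesis using l by blast
    next
      assume "step ci None (V v)" then show ?thesis using l by blast
    next
      fix b c' assume "step ci (Some b) c'" "V v \<in> leaves c'" "size c' < size ci"
      then show ?thesis using l sz by (meson order.strict_trans)
    qed
  qed
  show ?case
  proof (cases "V v \<in> leaves c1")
    case True
    have "step (Plus c1 c2) None (V v) \<or>
    (\<exists>b c'. step (Plus c1 c2) (Some b) c' \<and> V v \<in> leaves c' \<and> size c' < size (Plus c1 c2))"
      by (rule lift[OF True Plus.IH(1)]) (auto intro: step.plusL)
    then show ?thesis by blast
  next
    case False
    then have T: "V v \<in> leaves c2" using Plus.prems by simp
    have "step (Plus c1 c2) None (V v) \<or>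
    (\<exists>b c'. step (Plus c1 c2) (Some b) c' \<and> V v \<in> leaves c' \<and> size c' < size (Plus c1 c2))"
      by (rule lift[OF T Plus.IH(2)]) (auto intro: step.plusR)
    then show ?thesis by blast
  qed
qed (auto intro: step.intros)

lemma reach: "V v \<in> leaves c \<Longrightarrow> \<exists>s. weak_tr c s (V v)"
proof (induction "size c" arbitrary: c rule: less_induct)
  case less
  from first_step[OF less.prems] show ?case
  proof (elim disjE exE conjE)
    assume "c = V v" then show ?thesis
      by (intro exI[of _ "[]"]) (simp add: weak_eps_def)
  next
    assume "step c None (V v)"
    then have "weak_eps c (V v)" unfolding weak_eps_def by (rule r_into_rtranclp)
    then show ?thesis by (intro exI[of _ "[]"]) simp
  next
    fix b c' assume st: "step c (Some b) c'" and l: "V v \<in> leaves c'" and sz: "size c' < size c"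
    from less.hyps[OF sz l] obtain s where "weak_tr c' s (V v)" by blast
    moreover have "weak_act c b c'" unfolding weak_act_def weak_eps_def using st by blast
    ultimately show ?thesis by (blast intro: tr_cons)
  qed
qed

lemma reach_iff: "(\<exists>s. weak_tr c s (V v)) \<longleftrightarrow> V v \<in> leaves c"
proof
  assume "\<exists>s. weak_tr c s (V v)"
  then obtain s where "weak_tr c s (V v)" by blast
  from tr_leaves[OF this] show "V v \<in> leaves c" by simp
qed (rule reach)

lemma omega_ne:
  assumes "(UNIV :: 'a set) = {a}"
  shows "omega_ext (L :: 'a list set) \<noteq> {} \<longleftrightarrow> L \<noteq> {}"
proof
  assume "L \<noteq> {}"
  then obtain s where "s \<in> L" by blast
  have "\<forall>x::'a. x = a" using assms by auto
  have "\<forall>i<length s. (\<lambda>_. a) i = s ! i"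
  proof (intro allI impI)
    fix i show "(\<lambda>_. a) i = s ! i" using assms by (metis UNIV_I singletonD)
  qed
  then have "(\<lambda>_. a) \<in> omega_ext L" unfolding omega_ext_def using \<open>s \<in> L\<close> by blast
  then show "omega_ext L \<noteq> {}" by blast
qed (auto simp: omega_ext_def)

lemma leaves_subst: "V v \<in> leaves (subst \<sigma> m) \<longleftrightarrow>
   V v \<in> leaves m \<or> (\<exists>x. Var x \<in> leaves m \<and> V v \<in> leaves (\<sigma> x))"
  by (induction m) auto

lemma sem:
  assumes "(UNIV :: 'a set) = {a}" and "omega_equiv m n"
    and "\<forall>x. closed (\<sigma> x)"
  shows "V Yes \<in> leaves (subst \<sigma> (m :: 'a mon)) \<longleftrightarrow> V Yes \<in> leaves (subst \<sigma> n)"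
    and "V No \<in> leaves (subst \<sigma> (m :: 'a mon)) \<longleftrightarrow> V No \<in> leaves (subst \<sigma> n)"
proof -
  have ce: "closed_eq (subst \<sigma> m) (subst \<sigma> n)" using assms(2,3) unfolding omega_equiv_def by blast
  have "L_acc (subst \<sigma> m) \<noteq> {} \<longleftrightarrow> L_acc (subst \<sigma> n) \<noteq> {}"
  proof -
    have "omega_ext (L_acc (subst \<sigma> m)) = omega_ext (L_acc (subst \<sigma> n))" using ce by (simp add: closed_eq_def)
    then show ?thesis using omega_ne[OF assms(1), of "L_acc (subst \<sigma> m)"] omega_ne[OF assms(1), of "L_acc (subst \<sigma> n)"] by simp
  qed
  then show "V Yes \<in> leaves (subst \<sigma> (m :: 'a mon)) \<longleftrightarrow> V Yes \<in> leaves (subst \<sigma> n)"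
    unfolding L_acc_def using reach_iff by blast
  have "L_rej (subst \<sigma> m) \<noteq> {} \<longleftrightarrow> L_rej (subst \<sigma> n) \<noteq> {}"
  proof -
    have "omega_ext (L_rej (subst \<sigma> m)) = omega_ext (L_rej (subst \<sigma> n))" using ce by (simp add: closed_eq_def)
    then show ?thesis using omega_ne[OF assms(1), of "L_rej (subst \<sigma> m)"] omega_ne[OF assms(1), of "L_rej (subst \<sigma> n)"] by simp
  qed
  then show "V No \<in> leaves (subst \<sigma> (m :: 'a mon)) \<longleftrightarrow> V No \<in> leaves (subst \<sigma> n)"
    unfolding L_rej_def using reach_iff by blast
qed

theorem mainTheorem17:
  fixes a :: 'a and m n :: "'a mon"
  assumes "(UNIV :: 'a set) = {a}"
    and "omega_equiv m n"
  shows "derivable E_omega1' m n"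
proof -
  define s0 :: "nat \<Rightarrow> 'a mon" where "s0 = (\<lambda>_. V End)"
  define sy :: "nat \<Rightarrow> nat \<Rightarrow> 'a mon" where "sy = (\<lambda>x i. if i = x then V Yes else V End)"
  define sn :: "nat \<Rightarrow> nat \<Rightarrow> 'a mon" where "sn = (\<lambda>x i. if i = x then V No else V End)"
  have c0: "\<forall>x. closed (s0 x)" by (simp add: s0_def closed_def)
  have cy: "\<forall>i. closed (sy x i)" for x by (simp add: sy_def closed_def)
  have cn: "\<forall>i. closed (sn x i)" for x by (simp add: sn_def closed_def)
  have Y: "V Yes \<in> leaves m \<longleftrightarrow> V Yes \<in> leaves n"
    using sem(1)[OF assms c0] by (simp add: leaves_subst s0_def)
  have N: "V No \<in> leaves m \<longleftrightarrow> V No \<in> leaves n"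
    using sem(2)[OF assms c0] by (simp add: leaves_subst s0_def)
  have VY: "V Yes \<in> leaves m \<or> Var x \<in> leaves m \<longleftrightarrow> V Yes \<in> leaves n \<or> Var x \<in> leaves n" for x
    using sem(1)[OF assms cy[of x]] by (simp add: leaves_subst sy_def split: if_splits)
  have VN: "V No \<in> leaves m \<or> Var x \<in> leaves m \<longleftrightarrow> V No \<in> leaves n \<or> Var x \<in> leaves n" for x
    using sem(2)[OF assms cn[of x]] by (simp add: leaves_subst sn_def split: if_splits)
  show ?thesis
  proof (cases "V Yes \<in> leaves m \<and> V No \<in> leaves m")
    case True
    then have "D m (Plus (V Yes) (V No))" "D n (Plus (V Yes) (V No))"
      using Y N by (auto intro: yes_no)
    then show ?thesis by (blast intro: derivable.trans derivable.sym)
  next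
    case False
    have "leaves m - {V End} = leaves n - {V End}"
    proof -
      have "l \<in> leaves m \<longleftrightarrow> l \<in> leaves n" if "l \<noteq> V End" for l
      proof (cases l)
        case (Var x)
        then show ?thesis using False VY[of x] VN[of x] Y N by blast
      next
        case (V v)
        then show ?thesis using that Y N by (cases v) auto
      next
        case (Pre b k)
        then show ?thesis using leaves_form by blast
      next
        case (Plus k1 k2)
        then show ?thesis using leaves_form by blast
      qed
      then show ?thesis by blast
    qed
    then show ?thesis by (rule same_leaves)
  qed
qed

end
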